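(* Let $(y_i,x_i)\in\mathbb{R}^3\times\mathbb{R}^3$ be a point pair. There is a symmetric $4\times 4$ matrix $Q_i$ such that for every rotation $R_0\in SO(3)$ and every unit quaternion representation $w_0\in\mathbb{S}^3$ of $R_0$, $$\|y_i-R_0x_i\|_2^2=w_0^\top Q_i w_0 .$$ Moreover, $Q_i$ is positive semidefinite and its eigenvalues (counted with multiplicity) are $$(\|y_i\|_2+\|x_i\|_2)^2,\ (\|y_i\|_2+\|x_i\|_2)^2,\ (\|y_i\|_2-\|x_i\|_2)^2,\ (\|y_i\|_2-\|x_i\|_2)^2 .$$
   Context: $\mathbb{S}^3$ is the unit sphere in $\mathbb{R}^4$. For $w=[w_1;w_2;w_3;w_4]\in\mathbb{S}^3$ let $$R(w)=\begin{bmatrix} w_1^2+w_2^2-w_3^2-w_4^2 & 2(w_2w_3-w_1w_4) & 2(w_2w_4+w_1w_3)\\ 2(w_2w_3+w_1w_4) & w_1^2+w_3^2-w_2^2-w_4^2 & 2(w_3w_4-w_1w_2)\\ 2(w_2w_4-w_1w_3) & 2(w_3w_4+w_1w_2) & w_1^2+w_4^2-w_2^2-w_3^2\end{bmatrix}.$$ Every $R(w)$ is in $SO(3)$ and every $R\in SO(3)$ equals $R(w)$ for exactly two unit quaternions $\pm w$, called the unit quaternion representations of $R$. *)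

theory Defs
  imports "HOL-Analysis.Analysis"
begin

definition quat_rot :: "real^4 \<Rightarrow> real^3^3" where
  "quat_rot w = (let w1 = w$1; w2 = w$2; w3 = w$3; w4 = w$4 in
     vector [
       vector [w1^2+w2^2-w3^2-w4^2, 2*(w2*w3-w1*w4), 2*(w2*w4+w1*w3)],
       vector [2*(w2*w3+w1*w4), w1^2+w3^2-w2^2-w4^2, 2*(w3*w4-w1*w2)],
       vector [2*(w2*w4-w1*w3), 2*(w3*w4+w1*w2), w1^2+w4^2-w2^2-w3^2]])"

definition SO3 :: "(real^3^3) set" where
  "SO3 = {R. orthogonal_matrix R \<and> det R = 1}"

definition psd :: "real^'n^'n \<Rightarrow> bool" where
  "psd Q \<longleftrightarrow> (\<forall>v. 0 \<le> v \<bullet> (Q *v v))"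

text \<open>Characteristic polynomial of a square matrix, evaluated at t: det(tI - Q).
  Its roots with multiplicity are the eigenvalues counted with multiplicity.\<close>
definition charpoly_eval :: "real^'n^'n \<Rightarrow> real \<Rightarrow> real" where
  "charpoly_eval Q t = det (mat t - Q)"

end

theory Submission
  imports Defs
begin

lemma det_4:
  "det (A::'a::comm_ring_1^4^4) =
    A$1$1 * A$2$2 * A$3$3 * A$4$4
    - A$1$1 * A$2$2 * A$3$4 * A$4$3
    - A$1$1 * A$2$3 * A$3$2 * A$4$4
    + A$1$1 * A$2$3 * A$3$4 * A$4$2
    + A$1$1 * A$2$4 * A$3$2 * A$4$3
    - A$1$1 * A$2$4 * A$3$3 * A$4$2
    - A$1$2 * A$2$1 * A$3$3 * A$4$4
    + A$1$2 * A$2$1 * A$3$4 * A$4$3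
    + A$1$2 * A$2$3 * A$3$1 * A$4$4
    - A$1$2 * A$2$3 * A$3$4 * A$4$1
    - A$1$2 * A$2$4 * A$3$1 * A$4$3
    + A$1$2 * A$2$4 * A$3$3 * A$4$1
    + A$1$3 * A$2$1 * A$3$2 * A$4$4
    - A$1$3 * A$2$1 * A$3$4 * A$4$2
    - A$1$3 * A$2$2 * A$3$1 * A$4$4
    + A$1$3 * A$2$2 * A$3$4 * A$4$1
    + A$1$3 * A$2$4 * A$3$1 * A$4$2
    - A$1$3 * A$2$4 * A$3$2 * A$4$1
    - A$1$4 * A$2$1 * A$3$2 * A$4$3
    + A$1$4 * A$2$1 * A$3$3 * A$4$2
    + A$1$4 * A$2$2 * A$3$1 * A$4$3
    - A$1$4 * A$2$2 * A$3$3 * A$4$1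
    - A$1$4 * A$2$3 * A$3$1 * A$4$2
    + A$1$4 * A$2$3 * A$3$2 * A$4$1"
proof -
  have f1: "finite {2::4, 3, 4}" "1 \<notin> {2::4, 3, 4}" by auto
  have f2: "finite {3::4, 4}" "2 \<notin> {3::4, 4}" by auto
  have f3: "finite {4::4}" "3 \<notin> {4::4}" by auto
  show ?thesis
    unfolding det_def UNIV_4
    unfolding sum_over_permutations_insert[OF f1]
    unfolding sum_over_permutations_insert[OF f2]
    unfolding sum_over_permutations_insert[OF f3]
    unfolding permutes_sing
    by (simp add: sign_swap_id permutation_swap_id sign_compose permutation_compose sign_id swap_id_eq algebra_simps)
qed

definition Mm :: "real^3 \<Rightarrow> real^3 \<Rightarrow> real^4^4" where
  "Mm x y = (\<chi> i j.
     if i = 1 then (if j = 1 then x$1*y$1+x$2*y$2+x$3*y$3 else if j = 2 then y$3*x$2 - y$2*x$3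
                    else if j = 3 then y$1*x$3 - y$3*x$1 else y$2*x$1 - y$1*x$2)
     else if i = 2 then (if j = 1 then y$3*x$2 - y$2*x$3 else if j = 2 then x$1*y$1 - x$2*y$2 - x$3*y$3
                    else if j = 3 then y$1*x$2 + y$2*x$1 else y$1*x$3 + y$3*x$1)
     else if i = 3 then (if j = 1 then y$1*x$3 - y$3*x$1 else if j = 2 then y$1*x$2 + y$2*x$1
                    else if j = 3 then - x$1*y$1 + x$2*y$2 - x$3*y$3 else y$2*x$3 + y$3*x$2)
     else (if j = 1 then y$2*x$1 - y$1*x$2 else if j = 2 then y$1*x$3 + y$3*x$1
                    else if j = 3 then y$2*x$3 + y$3*x$2 else - x$1*y$1 - x$2*y$2 + x$3*y$3))"

definition Qm :: "real^3 \<Rightarrow> real^3 \<Rightarrow> real^4^4" where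
  "Qm x y = (\<chi> i j. (if i = j then (x\<bullet>x) + (y\<bullet>y) else 0) - 2 * Mm x y $ i $ j)"

lemma Mm_ent:
  "Mm x y $1$1 = x$1*y$1+x$2*y$2+x$3*y$3"
  "Mm x y $1$2 = y$3*x$2 - y$2*x$3"
  "Mm x y $1$3 = y$1*x$3 - y$3*x$1"
  "Mm x y $1$4 = y$2*x$1 - y$1*x$2"
  "Mm x y $2$1 = y$3*x$2 - y$2*x$3"
  "Mm x y $2$2 = x$1*y$1 - x$2*y$2 - x$3*y$3"
  "Mm x y $2$3 = y$1*x$2 + y$2*x$1"
  "Mm x y $2$4 = y$1*x$3 + y$3*x$1"
  "Mm x y $3$1 = y$1*x$3 - y$3*x$1"
  "Mm x y $3$2 = y$1*x$2 + y$2*x$1"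
  "Mm x y $3$3 = - x$1*y$1 + x$2*y$2 - x$3*y$3"
  "Mm x y $3$4 = y$2*x$3 + y$3*x$2"
  "Mm x y $4$1 = y$2*x$1 - y$1*x$2"
  "Mm x y $4$2 = y$1*x$3 + y$3*x$1"
  "Mm x y $4$3 = y$2*x$3 + y$3*x$2"
  "Mm x y $4$4 = - x$1*y$1 - x$2*y$2 + x$3*y$3"
  by (simp_all add: Mm_def)

lemma inner3: "(a::real^3) \<bullet> b = a$1*b$1 + a$2*b$2 + a$3*b$3"
  by (simp add: inner_vec_def sum_3)
lemma inner4: "(a::real^4) \<bullet> b = a$1*b$1 + a$2*b$2 + a$3*b$3 + a$4*b$4"
  by (simp add: inner_vec_def sum_4)

lemma Mm_sym: "transpose (Mm x y) = Mm x y"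
  unfolding vec_eq_iff forall_4 transpose_def by (simp add: Mm_ent)

lemma Qm_sym: "transpose (Qm x y) = Qm x y"
  using Mm_sym[of x y] unfolding Qm_def vec_eq_iff transpose_def
  by auto

lemma Mm_form: "w \<bullet> (Mm x y *v w) = y \<bullet> (quat_rot w *v x)"
  unfolding inner4 inner3 matrix_vector_mult_def
  by (simp add: sum_4 sum_3 Mm_ent quat_rot_def Let_def) algebra

lemma Qm_form: "w \<bullet> (Qm x y *v w) = ((x\<bullet>x) + (y\<bullet>y)) * (w \<bullet> w) - 2 * (w \<bullet> (Mm x y *v w))"
  unfolding inner4 matrix_vector_mult_def Qm_def
  by (simp add: sum_4 algebra_simps)

lemma Mm_sq: "(Mm x y *v v) \<bullet> (Mm x y *v v) = (x\<bullet>x) * (y\<bullet>y) * (v \<bullet> v)"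
  unfolding inner4 inner3 matrix_vector_mult_def
  by (simp add: sum_4 Mm_ent) algebra


lemma char_poly: "det (mat t - Qm x y) = ((t - x\<bullet>x - y\<bullet>y)^2 - 4*(x\<bullet>x)*(y\<bullet>y))^2"
  unfolding det_4 inner3
  by (simp add: Qm_def Mm_ent mat_def inner3) algebra


lemma orth_norm:
  assumes "R \<in> SO3" shows "norm (R *v (v::real^3)) = norm v"
proof -
  have "orthogonal_transformation (\<lambda>u. R *v u)"
    using assms unfolding SO3_def orthogonal_transformation_matrix by simp
  then show ?thesis using orthogonal_transformation_norm by blast
qed

lemma Qm_psd: "0 \<le> v \<bullet> (Qm x y *v v)"
proof -
  have cs: "v \<bullet> (Mm x y *v v) \<le> norm v * norm (Mm x y *v v)"
    by (rule norm_cauchy_schwarz)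
  have "norm (Mm x y *v v) = sqrt ((x\<bullet>x) * (y\<bullet>y) * (v \<bullet> v))"
    using Mm_sq[of x y v] by (simp add: norm_eq_sqrt_inner)
  also have "\<dots> = norm x * norm y * norm v"
    by (simp add: norm_eq_sqrt_inner real_sqrt_mult)
  finally have "v \<bullet> (Mm x y *v v) \<le> norm x * norm y * (norm v)^2"
    using cs by (simp add: power2_eq_square algebra_simps)
  moreover have "v \<bullet> (Qm x y *v v) = ((norm x)^2 + (norm y)^2) * (norm v)^2 - 2 * (v \<bullet> (Mm x y *v v))"
    by (simp add: Qm_form power2_norm_eq_inner)
  moreover have "0 \<le> (norm x - norm y)^2 * (norm v)^2" by simp
  ultimately show ?thesis by (simp add: power2_eq_square algebra_simps)
qed

theorem lemma2p1:
  fixes y x :: "real^3"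
  shows "\<exists>Q :: real^4^4.
           transpose Q = Q \<and>
           (\<forall>R0 w0. R0 \<in> SO3 \<and> norm w0 = 1 \<and> quat_rot w0 = R0 \<longrightarrow>
                (norm (y - R0 *v x))^2 = w0 \<bullet> (Q *v w0)) \<and>
           psd Q \<and>
           (\<forall>t. charpoly_eval Q t =
                 (t - (norm y + norm x)^2)^2 * (t - (norm y - norm x)^2)^2)"
proof (intro exI[of _ "Qm x y"] conjI allI impI)
  show "transpose (Qm x y) = Qm x y" by (rule Qm_sym)
  show "psd (Qm x y)" unfolding psd_def using Qm_psd by blast
next
  fix R0 w0 assume a: "R0 \<in> SO3 \<and> norm w0 = 1 \<and> quat_rot w0 = R0"
  have n: "norm (R0 *v x) = norm x" using a orth_norm by blast
  have ww: "w0 \<bullet> w0 = 1" using a by (metis norm_eq_1)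
  have "(norm (y - R0 *v x))^2 = y \<bullet> y - 2 * (y \<bullet> (R0 *v x)) + (norm (R0 *v x))^2"
    by (simp add: power2_norm_eq_inner inner_diff_left inner_diff_right inner_commute)
  also have "\<dots> = y \<bullet> y - 2 * (y \<bullet> (R0 *v x)) + x \<bullet> x"
    using n by (simp add: power2_norm_eq_inner)
  also have "\<dots> = w0 \<bullet> (Qm x y *v w0)"
    using a ww by (simp add: Qm_form Mm_form)
  finally show "(norm (y - R0 *v x))^2 = w0 \<bullet> (Qm x y *v w0)" .
next
  fix t
  have "charpoly_eval (Qm x y) t = ((t - (norm x)^2 - (norm y)^2)^2 - 4*(norm x)^2*(norm y)^2)^2"
    unfolding charpoly_eval_def char_poly by (simp add: power2_norm_eq_inner)
  also have "\<dots> = (t - (norm y + norm x)^2)^2 * (t - (norm y - norm x)^2)^2"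
    by algebra
  finally show "charpoly_eval (Qm x y) t = (t - (norm y + norm x)^2)^2 * (t - (norm y - norm x)^2)^2" .
qed

end
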